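(* Let $K$ be a field, $c\in K\setminus\{0\}$, $n\ge1$, let $f$ be a $c$-frieze of order $n$ over $K$, and put $s=f(0,n)$, $t=f(1,n+1)$. Then for every integer $k$ with $-1\le k\le n+2$ and every $i\in\mathbb{Z}$: (a) $f(2i,2i+k-1)=\dfrac{(-c)^k}{t}f(2i+k+1,2i+n+1)$; (b) $f(2i+1,2i+k)=\dfrac{(-c)^k}{s}f(2i+k+2,2i+n+2)$.
   Context: The $c$-continuant polynomials $P_k=P_k^c$ ($k\ge-1$) are defined by $P_{-1}=0$, $P_0=1$, and for $k\ge1$, $P_k(x_1,\dots,x_k)=x_kP_{k-1}(x_1,\dots,x_{k-1})+cP_{k-2}(x_1,\dots,x_{k-2})$. A family $(x_i)_{i\in\mathbb{Z}}$ in $K$ is $n$-admissible if $P_{n+2}(x_i,\dots,x_{i+n+1})=0$ for all $i$. Let $\mathbb{B}_n=\{(i,j)\in\mathbb{Z}^2:-2\le j-i\le n+1\}$. A $c$-frieze of order $n$ is a function $f:\mathbb{B}_n\to K$ for which there is an $n$-admissible family $(x_i)$ with $f(i,j)=P_{j-i+1}(x_i,\dots,x_j)$ for all $(i,j)\in\mathbb{B}_n$. Row $k$ of $f$ consists of the values $f(i,i+k-1)$; the lemma relates row $k$ to row $n-k+1$. It is known that $st=(-c)^{n+1}$, so $s,t\neq0$. *)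

theory Defs
  imports Main
begin

text \<open>Continuant polynomials evaluated: contP c x k = P_k(x 1, ..., x k) for k >= 0.\<close>
fun contP :: "'a::comm_ring_1 \<Rightarrow> (nat \<Rightarrow> 'a) \<Rightarrow> nat \<Rightarrow> 'a" where
  "contP c x 0 = 1"
| "contP c x (Suc 0) = x 1"
| "contP c x (Suc (Suc k)) = x (Suc (Suc k)) * contP c x (Suc k) + c * contP c x k"

text \<open>Integer-indexed version, with P_{-1} = 0 (used only for k >= -1).\<close>
definition contPi :: "'a::comm_ring_1 \<Rightarrow> (nat \<Rightarrow> 'a) \<Rightarrow> int \<Rightarrow> 'a" where
  "contPi c x k = (if k < 0 then 0 else contP c x (nat k))"

text \<open>P_k(x_i, ..., x_{i+k-1}) for a family indexed by integers.\<close>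
definition contAt :: "'a::comm_ring_1 \<Rightarrow> (int \<Rightarrow> 'a) \<Rightarrow> int \<Rightarrow> int \<Rightarrow> 'a" where
  "contAt c x i k = contPi c (\<lambda>m. x (i + int m - 1)) k"

definition admissible :: "'a::comm_ring_1 \<Rightarrow> nat \<Rightarrow> (int \<Rightarrow> 'a) \<Rightarrow> bool" where
  "admissible c n x \<longleftrightarrow> (\<forall>i. contAt c x i (int n + 2) = 0)"

definition in_Bn :: "nat \<Rightarrow> int \<Rightarrow> int \<Rightarrow> bool" where
  "in_Bn n i j \<longleftrightarrow> -2 \<le> j - i \<and> j - i \<le> int n + 1"

text \<open>A c-frieze of order n; f is a total function but only its values on B_n matter.\<close>
definition is_frieze :: "'a::comm_ring_1 \<Rightarrow> nat \<Rightarrow> (int \<Rightarrow> int \<Rightarrow> 'a) \<Rightarrow> bool" where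
  "is_frieze c n f \<longleftrightarrow> (\<exists>x. admissible c n x \<and>
      (\<forall>i j. in_Bn n i j \<longrightarrow> f i j = contAt c x i (j - i + 1)))"

end

theory Submission
  imports Defs
begin

lemma contP_bwd:
  "contP c y (Suc (Suc k)) = y 1 * contP c (\<lambda>m. y (m+1)) (Suc k) + c * contP c (\<lambda>m. y (m+2)) k"
proof (induction k rule: less_induct)
  case (less k)
  show ?case
  proof (cases k)
    case 0
    then show ?thesis by (simp add: algebra_simps)
  next
    case (Suc j)
    note kj = Suc
    show ?thesis
    proof (cases j)
      case 0
      then show ?thesis using kj by (simp add: algebra_simps numeral_eq_Suc)
    next
      case (Suc l)
      have IH1: "contP c y (Suc (Suc j)) = y 1 * contP c (\<lambda>m. y (m+1)) (Suc j) + c * contP c (\<lambda>m. y (m+2)) j"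
        using less kj by simp
      have IH2: "contP c y (Suc (Suc l)) = y 1 * contP c (\<lambda>m. y (m+1)) (Suc l) + c * contP c (\<lambda>m. y (m+2)) l"
        using less kj Suc by simp
      have e1: "contP c (\<lambda>m. y (m+1)) (Suc (Suc j)) = y (Suc (Suc (Suc j))) * contP c (\<lambda>m. y (m+1)) (Suc j) + c * contP c (\<lambda>m. y (m+1)) j"
        by simp
      have e2: "contP c (\<lambda>m. y (m+2)) (Suc (Suc l)) = y (Suc (Suc (Suc j))) * contP c (\<lambda>m. y (m+2)) (Suc l) + c * contP c (\<lambda>m. y (m+2)) l"
        using Suc by (simp add: numeral_eq_Suc)
      have d: "contP c y (Suc (Suc (Suc (Suc l)))) = y (Suc (Suc (Suc (Suc l)))) * contP c y (Suc (Suc (Suc l))) + c * contP c y (Suc (Suc l))"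
        by (rule contP.simps(3))
      show ?thesis unfolding kj Suc
        using d IH1 IH2 e1 e2 Suc by (simp del: contP.simps add: algebra_simps)
    qed
  qed
qed

lemma fwd:
  assumes "-1 \<le> k"
  shows "contAt c x i (k+2) = x (i+k+1) * contAt c x i (k+1) + c * contAt c x i k"
proof (cases "k = -1")
  case True
  then show ?thesis by (simp add: contAt_def contPi_def)
next
  case False
  then obtain m where km: "k = int m" using assms nonneg_int_cases[of k] by force
  have a: "nat (int m + 2) = Suc (Suc m)" by simp
  have b: "nat (int m + 1) = Suc m" by simp
  show ?thesis unfolding km contAt_def contPi_def using a b by (simp add: algebra_simps)
qed

lemma bwd:
  assumes "-1 \<le> k"
  shows "contAt c x i (k+2) = x i * contAt c x (i+1) (k+1) + c * contAt c x (i+2) k"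
proof (cases "k = -1")
  case True
  then show ?thesis by (simp add: contAt_def contPi_def)
next
  case False
  then obtain m where km: "k = int m" using assms nonneg_int_cases[of k] by force
  have a: "nat (int m + 2) = Suc (Suc m)" by simp
  have b: "nat (int m + 1) = Suc m" by simp
  have f1: "(\<lambda>ma. x (i + int (ma + 1) - 1)) = (\<lambda>ma. x (i + 1 + int ma - 1))" by (simp add: algebra_simps)
  have f2: "(\<lambda>ma. x (i + int (ma + 2) - 1)) = (\<lambda>ma. x (i + 2 + int ma - 1))" by (simp add: algebra_simps)
  show ?thesis unfolding km contAt_def contPi_def using a b
    contP_bwd[of c "\<lambda>ma. x (i + int ma - 1)" m] f1 f2 by simp
qed

lemma casorati:
  "contAt c x i (int m) * contAt c x (i+1) (int m) - contAt c x i (int m + 1) * contAt c x (i+1) (int m - 1) = (-c)^m"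
proof (induction m)
  case 0
  then show ?case by (simp add: contAt_def contPi_def)
next
  case (Suc m)
  have e1: "contAt c x i (int m + 2) = x (i + int m + 1) * contAt c x i (int m + 1) + c * contAt c x i (int m)"
    using fwd[of "int m" c x i] by simp
  have e2: "contAt c x (i+1) (int m + 1) = x (i + int m + 1) * contAt c x (i+1) (int m) + c * contAt c x (i+1) (int m - 1)"
    using fwd[of "int m - 1" c x "i+1"] by (simp add: algebra_simps)
  have "contAt c x i (int (Suc m)) * contAt c x (i+1) (int (Suc m)) - contAt c x i (int (Suc m) + 1) * contAt c x (i+1) (int (Suc m) - 1)
     = contAt c x i (int m + 1) * contAt c x (i+1) (int m + 1) - contAt c x i (int m + 2) * contAt c x (i+1) (int m)"
    by (simp add: algebra_simps)
  also have "\<dots> = - c * (contAt c x i (int m) * contAt c x (i+1) (int m) - contAt c x i (int m + 1) * contAt c x (i+1) (int m - 1))"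
    unfolding e1 e2 by (simp add: algebra_simps)
  also have "\<dots> = (-c)^(Suc m)" using Suc by simp
  finally show ?case .
qed

lemma keystep:
  fixes c :: "'a::field"
  assumes c: "c \<noteq> 0" and k: "-1 \<le> k" "k \<le> N"
    and P0: "contAt c x I k * T = (-c) powi k * contAt c x (I+k+1) (N+1-k)"
    and P1: "contAt c x I (k+1) * T = (-c) powi (k+1) * contAt c x (I+(k+1)+1) (N+1-(k+1))"
  shows "contAt c x I (k+2) * T = (-c) powi (k+2) * contAt c x (I+(k+2)+1) (N+1-(k+2))"
proof -
  have b: "contAt c x (I+k+1) (N+1-k) = x (I+k+1) * contAt c x (I+k+2) (N-k) + c * contAt c x (I+k+3) (N-1-k)"
    using bwd[of "N-1-k" c x "I+k+1"] k by (simp add: algebra_simps)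
  have p1: "(-c) powi (k+1) = (-c) powi k * (-c)" using c by (simp add: power_int_add_1)
  have p2: "(-c) powi (k+2) = (-c) powi k * c^2" using c by (simp add: power_int_add)
  have "contAt c x I (k+2) * T = x (I+k+1) * (contAt c x I (k+1) * T) + c * (contAt c x I k * T)"
    using fwd[of k c x I] k by (simp add: algebra_simps)
  also have "\<dots> = x (I+k+1) * ((-c) powi k * (-c)) * contAt c x (I+k+2) (N-k) + c * ((-c) powi k * contAt c x (I+k+1) (N+1-k))"
    using P0 P1 p1 by (simp add: algebra_simps)
  also have "\<dots> = (-c) powi k * c^2 * contAt c x (I+k+3) (N-1-k)"
    unfolding b by (simp add: algebra_simps power2_eq_square)
  also have "\<dots> = (-c) powi (k+2) * contAt c x (I+(k+2)+1) (N+1-(k+2))"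
    using p2 by (simp add: algebra_simps)
  finally show ?thesis .
qed

lemma keyall:
  fixes c :: "'a::field"
  assumes c: "c \<noteq> 0" and adm: "\<forall>i. contAt c x i (N+2) = 0"
    and T: "T = contAt c x (I+1) (N+1)"
    and k: "-1 \<le> k" "k \<le> N+2" and N0: "0 \<le> N"
  shows "contAt c x I k * T = (-c) powi k * contAt c x (I+k+1) (N+1-k)"
proof -
  define P where "P k \<longleftrightarrow> contAt c x I k * T = (-c) powi k * contAt c x (I+k+1) (N+1-k)" for k
  have all: "\<forall>m::nat. int m \<le> N+2 \<longrightarrow> P (int m - 1) \<and> P (int m)"
  proof
    fix m :: nat
    show "int m \<le> N+2 \<longrightarrow> P (int m - 1) \<and> P (int m)"
    proof (induction m)
      case 0
      have e: "I + (int 0 - 1) + 1 = I" "N + 1 - (int 0 - 1) = N+2" by simp_all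
      have h: "contAt c x (I + (int 0 - 1) + 1) (N + 1 - (int 0 - 1)) = 0" unfolding e using adm by simp
      have z: "contAt c x I (int 0 - 1) = 0" by (simp add: contAt_def contPi_def)
      have "P (int 0 - 1)" unfolding P_def using h z by simp
      moreover have "P (int 0)" unfolding P_def T by (simp add: contAt_def contPi_def)
      ultimately show ?case by simp
    next
      case (Suc m)
      show ?case
      proof
        assume h: "int (Suc m) \<le> N+2"
        then have a: "P (int m - 1)" "P (int m)" using Suc by auto
        have "P (int m - 1 + 2)"
          using keystep[OF c, of "int m - 1" N x I T] a h unfolding P_def by (simp add: algebra_simps)
        then show "P (int (Suc m) - 1) \<and> P (int (Suc m))" using a by (simp add: algebra_simps)
      qed
    qed
  qed
  have "P k"
  proof (cases "k = -1")
    case True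
    then show ?thesis using spec[OF all, of 0] k N0 by simp
  next
    case False
    then have e: "int (nat k) = k" using k by simp
    have "k \<le> N+2 \<longrightarrow> P (k - 1) \<and> P k" using spec[OF all, of "nat k"] unfolding e .
    then show ?thesis using k by simp
  qed
  then show ?thesis using k unfolding P_def by simp
qed

theorem mainTheorem10:
  fixes c :: "'a::field" and n :: nat and f :: "int \<Rightarrow> int \<Rightarrow> 'a"
  assumes "c \<noteq> 0" and "n \<ge> 1" and "is_frieze c n f"
    and "s = f 0 (int n)" and "t = f 1 (int n + 1)"
  shows "\<forall>k i. -1 \<le> k \<and> k \<le> int n + 2 \<longrightarrow>
           f (2*i) (2*i + k - 1) = ((-c) powi k / t) * f (2*i + k + 1) (2*i + int n + 1)
         \<and> f (2*i + 1) (2*i + k) = ((-c) powi k / s) * f (2*i + k + 2) (2*i + int n + 2)"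
proof -
  note c = assms(1)
  obtain x where adm0: "admissible c n x" and fx: "\<forall>i j. in_Bn n i j \<longrightarrow> f i j = contAt c x i (j - i + 1)"
    using assms(3) unfolding is_frieze_def by blast
  have adm: "\<forall>i. contAt c x i (int n + 2) = 0" using adm0 unfolding admissible_def by simp
  define R where "R i = contAt c x i (int n + 1)" for i
  have RR: "R i * R (i+1) = (-c)^(n+1)" for i
  proof -
    have "contAt c x i (int (n+1)) * contAt c x (i+1) (int (n+1)) - contAt c x i (int (n+1) + 1) * contAt c x (i+1) (int (n+1) - 1) = (-c)^(n+1)"
      by (rule casorati)
    moreover have "contAt c x i (int (n+1) + 1) = 0" using adm by (simp add: algebra_simps)
    ultimately show ?thesis unfolding R_def by (simp add: ac_simps)
  qed
  have nz: "(-c)^(n+1) \<noteq> 0" using c by simp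
  have per: "R (i+2) = R i" for i
  proof -
    have "R i * R (i+1) = R (i+1) * R (i+2)" using RR[of i] RR[of "i+1"] by (simp add: algebra_simps)
    moreover have "R (i+1) \<noteq> 0" using RR[of i] nz by auto
    ultimately show ?thesis by simp
  qed
  have perj: "R (i + 2*j) = R i" for i j
  proof (induction j rule: int_induct[where k=0])
    case base then show ?case by simp
  next
    case (step1 j)
    then show ?case using per[of "i + 2*j"] by (simp add: algebra_simps)
  next
    case (step2 j)
    then show ?case using per[of "i + 2*(j - 1)"] by (simp add: algebra_simps)
  qed
  have s: "s = R 0" using assms(4) fx[rule_format, of 0 "int n"] unfolding R_def by (simp add: in_Bn_def)
  have t: "t = R 1" using assms(5) fx[rule_format, of 1 "int n + 1"] unfolding R_def by (simp add: in_Bn_def)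
  have s0: "s \<noteq> 0" and t0: "t \<noteq> 0" using RR[of 0] nz s t by auto
  show ?thesis
  proof (intro allI impI)
    fix k i :: int
    assume k: "-1 \<le> k \<and> k \<le> int n + 2"
    have Ta: "t = contAt c x (2*i+1) (int n + 1)" using t perj[of 1 i] unfolding R_def by (simp add: algebra_simps)
    have Tb: "s = contAt c x (2*i+1+1) (int n + 1)" using s perj[of 0 "i+1"] unfolding R_def by (simp add: algebra_simps)
    have ka: "contAt c x (2*i) k * t = (-c) powi k * contAt c x (2*i+k+1) (int n+1-k)"
      using keyall[OF c adm Ta] k by simp
    have kb: "contAt c x (2*i+1) k * s = (-c) powi k * contAt c x (2*i+1+k+1) (int n+1-k)"
      using keyall[OF c adm Tb] k by simp
    have f1: "f (2*i) (2*i + k - 1) = contAt c x (2*i) k"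
      using fx[rule_format, of "2*i" "2*i+k-1"] k by (simp add: in_Bn_def)
    have f2: "f (2*i + k + 1) (2*i + int n + 1) = contAt c x (2*i+k+1) (int n+1-k)"
      using fx[rule_format, of "2*i+k+1" "2*i + int n + 1"] k by (simp add: in_Bn_def algebra_simps)
    have f3: "f (2*i + 1) (2*i + k) = contAt c x (2*i+1) k"
      using fx[rule_format, of "2*i+1" "2*i+k"] k by (simp add: in_Bn_def)
    have f4: "f (2*i + k + 2) (2*i + int n + 2) = contAt c x (2*i+1+k+1) (int n+1-k)"
      using fx[rule_format, of "2*i+k+2" "2*i + int n + 2"] k by (simp add: in_Bn_def algebra_simps)
    show "f (2*i) (2*i + k - 1) = ((-c) powi k / t) * f (2*i + k + 1) (2*i + int n + 1)
         \<and> f (2*i + 1) (2*i + k) = ((-c) powi k / s) * f (2*i + k + 2) (2*i + int n + 2)"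
      unfolding f1 f2 f3 f4 using ka kb s0 t0 by (simp add: field_simps)
  qed
qed

end
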